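(* Consider the parametric constraint system $g(p,x)\in C$ under the standing assumptions at $(\bar p,\bar x)\in\operatorname{gph}\Gamma$, let $\zeta:P\to\mathbb{R}$ be continuous at $\bar p$ and $D:=D^{\mathrm{Im}}_{p,\zeta}g(\bar p,\bar x)$. Assume that for every $v\in D$ and every $t_k\downarrow0$ there is $u\in\mathbb{R}^n$ with $\liminf_{k\to\infty}\operatorname{dist}(g(\bar p,\bar x)+t_k(v+\nabla_xg(\bar p,\bar x)u);C)/t_k=0$, and that for every $(v,u)\in D\times\mathbb{R}^n$, $(v,u)\ne(0,0)$, with $v+\nabla_xg(\bar p,\bar x)u\in T_C(g(\bar p,\bar x))$ the implication $$\big[\lambda\in N_C\big(g(\bar p,\bar x);v+\nabla_xg(\bar p,\bar x)u\big),\ \nabla_xg(\bar p,\bar x)^T\lambda=0\big]\Longrightarrow\lambda=0$$ holds. Then the system enjoys Robinson stability at $(\bar p,\bar x)$.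
   Context: $P$ is a topological space, $C\subset\mathbb{R}^l$ closed, $g:P\times\mathbb{R}^n\to\mathbb{R}^l$, $\Gamma(p)=\{x:g(p,x)\in C\}$. Standing assumptions: there are neighborhoods $U$ of $\bar x$ and $V$ of $\bar p$ such that for each $p\in V$ the map $g(p,\cdot)$ is continuously differentiable on $U$, and $g$, $\nabla_xg$ are continuous at $(\bar p,\bar x)$. Robinson stability at $(\bar p,\bar x)$: there exist $\kappa\ge0$ and neighborhoods $U$ of $\bar x$, $V$ of $\bar p$ with $\operatorname{dist}(x;\Gamma(p))\le\kappa\operatorname{dist}(g(p,x);C)$ for all $(p,x)\in V\times U$. Image derivative $D^{\mathrm{Im}}_{p,\zeta}g(\bar p,\bar x)$: the smallest closed cone containing $0$ and all $v$ for which there is a sequence $p_k\in P$ with $0<\|g(p_k,\bar x)-g(\bar p,\bar x)\|<1/k$, $\|\nabla_xg(p_k,\bar x)-\nabla_xg(\bar p,\bar x)\|<1/k$, $|\zeta(p_k)-\zeta(\bar p)|<1/k$, and $v=\lim_k(g(p_k,\bar x)-g(\bar p,\bar x))/\|g(p_k,\bar x)-g(\bar p,\bar x)\|$. $T_C$ is the contingent cone; $N_C(\bar z;w)=\{v:\exists t_k\downarrow0,w_k\to w,v_k\to v,\ \bar z+t_kw_k\in C,\ v_k\in\widehat N_C(\bar z+t_kw_k)\}$ is the directional limiting normal cone, $\widehat N_C$ the regular normal cone. *)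

theory Defs
  imports "HOL-Analysis.Analysis"
begin

definition pjac :: "('p \<Rightarrow> real^'n \<Rightarrow> real^'l) \<Rightarrow> 'p \<Rightarrow> real^'n \<Rightarrow> real^'n^'l" where
  "pjac g p x = jacobian (g p) (at x)"

definition Gam :: "('p \<Rightarrow> real^'n \<Rightarrow> real^'l) \<Rightarrow> (real^'l) set \<Rightarrow> 'p \<Rightarrow> (real^'n) set" where
  "Gam g C p = {x. g p x \<in> C}"

definition standing_assumptions ::
  "('p::topological_space \<Rightarrow> real^'n \<Rightarrow> real^'l) \<Rightarrow> 'p \<Rightarrow> real^'n \<Rightarrow> bool" where
  "standing_assumptions g pb xb \<longleftrightarrow>
     (\<exists>U V. open U \<and> xb \<in> U \<and> open V \<and> pb \<in> V \<and>
        (\<forall>p\<in>V. (\<forall>x\<in>U. g p differentiable (at x)) \<and> continuous_on U (\<lambda>x. pjac g p x))) \<and>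
     ((\<lambda>(p, x). g p x) \<longlongrightarrow> g pb xb) (at (pb, xb)) \<and>
     ((\<lambda>(p, x). pjac g p x) \<longlongrightarrow> pjac g pb xb) (at (pb, xb))"

text \<open>Robinson stability at (pb, xb). Distance to the empty set is +infinity in the paper,
  hence we require Gamma(p) to be nonempty (Isabelle's infdist to the empty set is 0).\<close>
definition robinson_stable ::
  "('p::topological_space \<Rightarrow> real^'n \<Rightarrow> real^'l) \<Rightarrow> (real^'l) set \<Rightarrow> 'p \<Rightarrow> real^'n \<Rightarrow> bool" where
  "robinson_stable g C pb xb \<longleftrightarrow>
     (\<exists>\<kappa>\<ge>0. \<exists>U V. open U \<and> xb \<in> U \<and> open V \<and> pb \<in> V \<and>
        (\<forall>p\<in>V. \<forall>x\<in>U. Gam g C p \<noteq> {} \<and>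
            infdist x (Gam g C p) \<le> \<kappa> * infdist (g p x) C))"

definition image_deriv_gen ::
  "('p \<Rightarrow> real^'n \<Rightarrow> real^'l) \<Rightarrow> ('p \<Rightarrow> real) \<Rightarrow> 'p \<Rightarrow> real^'n \<Rightarrow> (real^'l) set" where
  "image_deriv_gen g \<zeta> pb xb = {v. \<exists>pk :: nat \<Rightarrow> 'p.
      (\<forall>k. g (pk k) differentiable (at xb) \<and>
           0 < norm (g (pk k) xb - g pb xb) \<and>
           norm (g (pk k) xb - g pb xb) < 1 / real (Suc k) \<and>
           norm (pjac g (pk k) xb - pjac g pb xb) < 1 / real (Suc k) \<and>
           \<bar>\<zeta> (pk k) - \<zeta> pb\<bar> < 1 / real (Suc k)) \<and>
      ((\<lambda>k. (1 / norm (g (pk k) xb - g pb xb)) *\<^sub>R (g (pk k) xb - g pb xb)) \<longlonglongrightarrow> v)}"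

definition image_deriv ::
  "('p \<Rightarrow> real^'n \<Rightarrow> real^'l) \<Rightarrow> ('p \<Rightarrow> real) \<Rightarrow> 'p \<Rightarrow> real^'n \<Rightarrow> (real^'l) set" where
  "image_deriv g \<zeta> pb xb =
     \<Inter>{K. closed K \<and> cone K \<and> 0 \<in> K \<and> image_deriv_gen g \<zeta> pb xb \<subseteq> K}"

definition tangent_cone :: "'a::real_normed_vector set \<Rightarrow> 'a \<Rightarrow> 'a set" where
  "tangent_cone C z = {w. \<exists>t wk. (\<forall>k. 0 < t k) \<and> t \<longlonglongrightarrow> 0 \<and> wk \<longlonglongrightarrow> w \<and>
                            (\<forall>k. z + t k *\<^sub>R wk k \<in> C)}"

definition regular_normal_cone :: "'a::real_inner set \<Rightarrow> 'a \<Rightarrow> 'a set" where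
  "regular_normal_cone C z = {v. z \<in> C \<and>
     (\<forall>\<epsilon>>0. \<exists>\<delta>>0. \<forall>z'\<in>C. norm (z' - z) < \<delta> \<longrightarrow> v \<bullet> (z' - z) \<le> \<epsilon> * norm (z' - z))}"

definition dir_normal_cone :: "'a::real_inner set \<Rightarrow> 'a \<Rightarrow> 'a \<Rightarrow> 'a set" where
  "dir_normal_cone C z w = {v. \<exists>t wk vk. (\<forall>k. 0 < t k) \<and> t \<longlonglongrightarrow> 0 \<and> wk \<longlonglongrightarrow> w \<and> vk \<longlonglongrightarrow> v \<and>
      (\<forall>k. z + t k *\<^sub>R wk k \<in> C \<and> vk k \<in> regular_normal_cone C (z + t k *\<^sub>R wk k))}"

end

theory Submission
  imports Defs
begin


lemma tendsto_mv:
  fixes M :: "'b \<Rightarrow> real^'n^'m"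
  shows "(M \<longlongrightarrow> A) F \<Longrightarrow> (x \<longlongrightarrow> y) F \<Longrightarrow> ((\<lambda>k. M k *v x k) \<longlongrightarrow> A *v y) F"
  unfolding matrix_vector_mult_def by (intro tendsto_intros)

lemma norm_mv_le:
  fixes M :: "real^'n^'m"
  shows "norm (M *v x) \<le> (real CARD('m) * real CARD('n) * norm M) * norm x"
proof -
  have "onorm ((*v) M) \<le> real CARD('m) * real CARD('n) * norm M"
    by (rule onorm_le_matrix_component) (meson component_le_norm_cart Finite_Cartesian_Product.norm_nth_le order_trans)
  moreover have "norm (M *v x) \<le> onorm ((*v) M) * norm x"
    by (rule onorm) (simp add: bounded_linear_intros matrix_vector_mul_bounded_linear)
  ultimately show ?thesis by (meson mult_right_mono norm_ge_zero order_trans)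
qed

lemma proximal_normal:
  fixes C :: "'a::real_inner set"
  assumes cC: "c \<in> C" and near: "\<And>z. z \<in> C \<Longrightarrow> norm (y - c) \<le> norm (y - z)" and yc: "y \<noteq> c"
  shows "(1 / norm (y - c)) *\<^sub>R (y - c) \<in> regular_normal_cone C c"
  unfolding regular_normal_cone_def
proof (intro CollectI conjI allI impI cC)
  fix e :: real assume e: "e > 0"
  define r where "r = norm (y - c)"
  have r: "r > 0" using yc r_def by simp
  show "\<exists>\<delta>>0. \<forall>z'\<in>C. norm (z' - c) < \<delta> \<longrightarrow> (1 / norm (y - c)) *\<^sub>R (y - c) \<bullet> (z' - c) \<le> e * norm (z' - c)"
  proof (intro exI[of _ "2*e*r"] conjI ballI impI)
    show "2*e*r > 0" using e r by simp
    fix z assume z: "z \<in> C" and zn: "norm (z - c) < 2*e*r"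
    have h1: "norm (y - c)^2 \<le> norm (y - z)^2" using near[OF z] by (simp add: power_mono)
    have h2: "(y - c) \<bullet> (z - c) = ((norm (y-c))\<^sup>2 + (norm (z-c))\<^sup>2 - (norm ((y - c) - (z - c)))\<^sup>2) / 2"
      by (rule dot_norm_neg)
    have "(y - c) - (z - c) = y - z" by simp
    with h1 h2 have h3: "(y - c) \<bullet> (z - c) \<le> (norm (z - c))\<^sup>2 / 2" by simp
    have h4: "(norm (z - c))\<^sup>2 / 2 \<le> e * r * norm (z - c)"
    proof -
      have "norm (z - c) * norm (z - c) \<le> (2*e*r) * norm (z - c)"
        using zn by (intro mult_right_mono) auto
      thus ?thesis by (simp add: power2_eq_square)
    qed
    have "(1 / norm (y - c)) *\<^sub>R (y - c) \<bullet> (z - c) = ((y - c) \<bullet> (z - c)) / r"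
      by (simp add: r_def)
    also have "\<dots> \<le> (e * r * norm (z - c)) / r"
      using h3 h4 r by (intro divide_right_mono) auto
    also have "\<dots> = e * norm (z - c)" using r by simp
    finally show "(1 / norm (y - c)) *\<^sub>R (y - c) \<bullet> (z - c) \<le> e * norm (z - c)" .
  qed
qed

lemma ekeland_fin:
  fixes f :: "'a::metric_space \<Rightarrow> real"
  assumes K: "compact K" and fc: "continuous_on K f" and x0: "x0 \<in> K" and eta: "\<eta> > 0"
  obtains x where "x \<in> K" "\<eta> * dist x x0 \<le> f x0 - f x" "\<And>z. z \<in> K \<Longrightarrow> f x \<le> f z + \<eta> * dist z x"
proof -
  define S where "S = {x \<in> K. f x + \<eta> * dist x x0 \<le> f x0}"
  have cl: "closed S" unfolding S_def
    by (intro continuous_on_closed_Collect_le compact_imp_closed K continuous_intros fc)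
  have "S = K \<inter> S" unfolding S_def by auto
  hence cS: "compact S" using compact_Int_closed[OF K cl] by simp
  have "x0 \<in> S" using x0 unfolding S_def by simp
  hence ne: "S \<noteq> {}" by auto
  have "continuous_on S f" using fc by (rule continuous_on_subset) (auto simp: S_def)
  then obtain x where xS: "x \<in> S" and xmin: "\<And>y. y \<in> S \<Longrightarrow> f x \<le> f y"
    using continuous_attains_inf[OF cS ne] by blast
  show ?thesis
  proof (rule that)
    show "x \<in> K" using xS by (simp add: S_def)
    show "\<eta> * dist x x0 \<le> f x0 - f x" using xS by (simp add: S_def)
    fix z assume zK: "z \<in> K"
    show "f x \<le> f z + \<eta> * dist z x"
    proof (cases "z \<in> S")
      case True
      then show ?thesis using xmin[OF True] eta by (simp add: add_increasing2)
    next
      case False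
      hence "f z + \<eta> * dist z x0 > f x0" using zK by (simp add: S_def)
      moreover have "f x0 \<ge> f x + \<eta> * dist x x0" using xS by (simp add: S_def)
      moreover have "dist z x0 \<le> dist z x + dist x x0" by (rule dist_triangle)
      hence "\<eta> * dist z x0 \<le> \<eta> * dist z x + \<eta> * dist x x0"
        using eta by (metis distrib_left mult_left_mono less_imp_le)
      ultimately show ?thesis by linarith
    qed
  qed
qed

lemma mvt_unif:
  fixes f :: "real^'n \<Rightarrow> real^'l"
  assumes der: "\<And>x. x \<in> ball a r \<Longrightarrow> (f has_derivative (\<lambda>h. J x *v h)) (at x)"
    and bd: "\<And>x. x \<in> ball a r \<Longrightarrow> norm (J x - A) \<le> e"
    and x: "x \<in> ball a r"
  shows "norm (f x - f a - A *v (x - a)) \<le> (real CARD('l) * real CARD('n) * e) * norm (x - a)"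
proof -
  have "0 < r" using x by (metis dist_not_less_zero mem_ball not_less order_less_le_trans)
  hence a: "a \<in> ball a r" by simp
  define c where "c = real CARD('l) * real CARD('n)"
  define h where "h x = f x - A *v x" for x
  have hd: "(h has_derivative (\<lambda>v. (J x - A) *v v)) (at x within ball a r)" if "x \<in> ball a r" for x
  proof -
    have "(h has_derivative (\<lambda>v. J x *v v - A *v v)) (at x)"
      unfolding h_def by (intro derivative_intros der that)
         (simp add: bounded_linear_imp_has_derivative matrix_vector_mul_bounded_linear)
    thus ?thesis by (simp add: matrix_vector_mult_diff_rdistrib has_derivative_at_withinI)
  qed
  have ob: "onorm (\<lambda>v. (J x - A) *v v) \<le> c * e" if "x \<in> ball a r" for x
  proof (rule onorm_le)
    fix v
    have "norm ((J x - A) *v v) \<le> (c * norm (J x - A)) * norm v"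
      unfolding c_def by (rule norm_mv_le)
    also have "\<dots> \<le> (c * e) * norm v"
      using bd[OF that] by (intro mult_right_mono mult_left_mono) (auto simp: c_def)
    finally show "norm ((J x - A) *v v) \<le> c * e * norm v" .
  qed
  have "norm (h x - h a) \<le> (c * e) * norm (x - a)"
    by (rule differentiable_bound[OF convex_ball hd ob x a])
  moreover have "h x - h a = f x - f a - A *v (x - a)"
    by (simp add: h_def matrix_vector_mult_diff_distrib)
  ultimately show ?thesis by (simp add: c_def)
qed

lemma grad_bound:
  fixes F :: "real^'n \<Rightarrow> real^'l"
  assumes der: "(F has_derivative (\<lambda>h. J *v h)) (at x0)" and ne: "F x0 \<noteq> c"
    and eta: "\<eta> \<ge> 0" and dpos: "\<delta> > 0"
    and loc: "\<And>x. norm (x - x0) < \<delta> \<Longrightarrow> norm (F x0 - c) - \<eta> * norm (x - x0) \<le> norm (F x - c)"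
  shows "norm (transpose J *v ((1 / norm (F x0 - c)) *\<^sub>R (F x0 - c))) \<le> \<eta>"
proof (rule ccontr)
  define l where "l = (1 / norm (F x0 - c)) *\<^sub>R (F x0 - c)"
  define d where "d = transpose J *v l"
  assume "\<not> norm (transpose J *v ((1 / norm (F x0 - c)) *\<^sub>R (F x0 - c))) \<le> \<eta>"
  hence dgt: "norm d > \<eta>" by (simp add: d_def l_def)
  hence dpos': "norm d > 0" using eta by linarith
  define H where "H x = norm (F x - c)" for x
  have sg: "sgn (F x0 - c) = l" by (simp add: l_def sgn_div_norm divide_inverse_commute scaleR_conv_of_real)
  have dF: "((\<lambda>x. F x - c) has_derivative (\<lambda>h. J *v h)) (at x0)"
    using has_derivative_diff[OF der has_derivative_const[of c]] by simp
  have "(H has_derivative (\<lambda>h. sgn (F x0 - c) \<bullet> (J *v h))) (at x0)"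
    unfolding H_def using has_derivative_compose[OF dF has_derivative_norm[of "F x0 - c"]] ne by (simp add: inner_commute)
  hence dH: "(H has_derivative (\<lambda>h. d \<bullet> h)) (at x0)"
    by (simp add: sg d_def dot_lmul_matrix)
  define e where "e = (norm d - \<eta>) / 2"
  have e: "e > 0" using dgt by (simp add: e_def)
  obtain \<delta>' where d': "\<delta>' > 0" and
    lin: "\<And>y. norm (y - x0) < \<delta>' \<Longrightarrow> norm (H y - H x0 - d \<bullet> (y - x0)) \<le> e * norm (y - x0)"
    using dH e unfolding has_derivative_at_alt by blast
  define t where "t = min \<delta> \<delta>' / (2 * norm d)"
  have t: "t > 0" using dpos d' dpos' by (simp add: t_def)
  define y where "y = x0 - t *\<^sub>R d"
  have ny: "norm (y - x0) = t * norm d" using t by (simp add: y_def)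
  have "t * norm d = min \<delta> \<delta>' / 2" using dpos' by (simp add: t_def)
  hence small: "norm (y - x0) < \<delta>" "norm (y - x0) < \<delta>'" using ny dpos d' by auto
  have i1: "H x0 - \<eta> * (t * norm d) \<le> H y" using loc[OF small(1)] ny by (simp add: H_def)
  have "d \<bullet> (y - x0) = - t * (norm d)^2" by (simp add: y_def power2_norm_eq_inner)
  hence i2: "H y - H x0 + t * (norm d)^2 \<le> e * (t * norm d)"
    using lin[OF small(2)] ny by (simp add: abs_le_iff)
  from i1 i2 have "t * (norm d)^2 \<le> (e + \<eta>) * (t * norm d)" by (simp add: algebra_simps)
  hence "(t * norm d) * norm d \<le> (t * norm d) * (e + \<eta>)" by (simp add: power2_eq_square algebra_simps)
  hence "norm d \<le> e + \<eta>" using t dpos' by (simp add: mult_le_cancel_left_pos)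
  thus False using dgt by (simp add: e_def field_simps)
qed

lemma gen_sub_image_deriv: "image_deriv_gen g \<zeta> pb xb \<subseteq> image_deriv g \<zeta> pb xb"
  unfolding image_deriv_def by blast

lemma image_deriv_cone: "v \<in> image_deriv g \<zeta> pb xb \<Longrightarrow> a \<ge> 0 \<Longrightarrow> a *\<^sub>R v \<in> image_deriv g \<zeta> pb xb"
  unfolding image_deriv_def cone_def by blast

lemma image_deriv_zero: "0 \<in> image_deriv g \<zeta> pb xb"
  unfolding image_deriv_def by blast

lemma liminf_zero_subseq:
  fixes X :: "nat \<Rightarrow> real"
  assumes "liminf (\<lambda>k. ereal (X k)) = 0"
  obtains r where "strict_mono r" "(X \<circ> r) \<longlonglongrightarrow> 0"
proof -
  obtain r where r: "strict_mono r" "((\<lambda>k. ereal (X k)) \<circ> r) \<longlonglongrightarrow> liminf (\<lambda>k. ereal (X k))"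
    using liminf_subseq_lim by blast
  hence "((\<lambda>k. ereal ((X \<circ> r) k)) \<longlonglongrightarrow> ereal 0)" using assms by (simp add: o_def zero_ereal_def)
  hence "(X \<circ> r) \<longlonglongrightarrow> 0" by (simp only: lim_ereal)
  with r show ?thesis using that by blast
qed

lemma tendsto_bound0:
  fixes f :: "'a \<Rightarrow> 'b::real_normed_vector"
  assumes "eventually (\<lambda>k. norm (f k - a) \<le> e k) F" "(e \<longlongrightarrow> 0) F"
  shows "(f \<longlongrightarrow> a) F"
proof -
  have "((\<lambda>k. f k - a) \<longlongrightarrow> 0) F" by (rule Lim_null_comparison[OF assms])
  thus ?thesis by (rule LIM_zero_cancel)
qed

lemma inv_m_lim: "(\<lambda>k. 1 / (real k + 2)) \<longlonglongrightarrow> 0"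
proof -
  have "(\<lambda>k. 1 / (real k + 2)) \<longlonglongrightarrow> 0 * 0"
  proof (rule tendsto_bound0[where e="\<lambda>k. inverse (real (Suc k))"])
    show "\<forall>\<^sub>F k in sequentially. norm (1 / (real k + 2) - 0 * 0) \<le> inverse (real (Suc k))"
      by (auto simp: field_simps)
    show "(\<lambda>k. inverse (real (Suc k))) \<longlonglongrightarrow> 0" by (rule LIMSEQ_inverse_real_of_nat)
  qed
  thus ?thesis by simp
qed

lemma nearest_infdist:
  fixes C :: "'a::metric_space set"
  assumes "c \<in> C" "\<And>z. z \<in> C \<Longrightarrow> dist y c \<le> dist y z"
  shows "infdist y C = dist y c"
proof (rule antisym)
  show "infdist y C \<le> dist y c" by (rule infdist_le[OF assms(1)])
  have "C \<noteq> {}" using assms(1) by auto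
  thus "dist y c \<le> infdist y C" unfolding infdist_notempty[OF \<open>C \<noteq> {}\<close>]
    by (intro cINF_greatest assms(2)) auto
qed

lemma gen_from_seq:
  fixes g :: "'p \<Rightarrow> real^'n \<Rightarrow> real^'l"
  assumes q: "strict_mono q"
    and diff: "\<And>k. g (pk k) differentiable (at xb)"
    and tb: "\<And>k. norm (g (pk k) xb - g pb xb) < 1 / (real k + 2)"
    and jb: "\<And>k. norm (pjac g (pk k) xb - pjac g pb xb) < 1 / (real k + 2)"
    and zb: "\<And>k. \<bar>\<zeta> (pk k) - \<zeta> pb\<bar> < 1 / (real k + 2)"
    and pos: "\<And>j. j \<ge> N \<Longrightarrow> 0 < norm (g (pk (q j)) xb - g pb xb)"
    and lim: "(\<lambda>j. (1 / norm (g (pk (q j)) xb - g pb xb)) *\<^sub>R (g (pk (q j)) xb - g pb xb)) \<longlonglongrightarrow> v"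
  shows "v \<in> image_deriv_gen g \<zeta> pb xb"
  unfolding image_deriv_gen_def
proof (intro CollectI exI[of _ "\<lambda>j. pk (q (j + N))"] conjI allI)
  fix j
  have le: "j \<le> q (j + N)" using seq_suble[OF q, of "j + N"] by simp
  have m: "1 / (real (q (j + N)) + 2) \<le> 1 / real (Suc j)"
    using le by (intro divide_left_mono) auto
  show "g (pk (q (j + N))) differentiable at xb" by (rule diff)
  show "0 < norm (g (pk (q (j + N))) xb - g pb xb)" by (rule pos) simp
  show "norm (g (pk (q (j + N))) xb - g pb xb) < 1 / real (Suc j)" using tb[of "q (j+N)"] m by linarith
  show "norm (pjac g (pk (q (j + N))) xb - pjac g pb xb) < 1 / real (Suc j)" using jb[of "q (j+N)"] m by linarith
  show "\<bar>\<zeta> (pk (q (j + N))) - \<zeta> pb\<bar> < 1 / real (Suc j)" using zb[of "q (j+N)"] m by linarith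
next
  show "(\<lambda>k. (1 / norm (g (pk (q (k + N))) xb - g pb xb)) *\<^sub>R (g (pk (q (k + N))) xb - g pb xb)) \<longlonglongrightarrow> v"
    using LIMSEQ_ignore_initial_segment[OF lim, of N] by simp
qed


lemma core:
  fixes g :: "'p::topological_space \<Rightarrow> real^'n \<Rightarrow> real^'l"
    and C :: "(real^'l) set" and \<zeta> :: "'p \<Rightarrow> real" and pb :: 'p and xb :: "real^'n"
    and pk :: "nat \<Rightarrow> 'p" and xt :: "nat \<Rightarrow> real^'n" and cc :: "nat \<Rightarrow> real^'l" and \<delta> :: "nat \<Rightarrow> real"
  assumes gbC: "g pb xb \<in> C"
    and A1: "\<forall>v \<in> image_deriv g \<zeta> pb xb. \<forall>t :: nat \<Rightarrow> real.
               (\<forall>k. 0 < t k) \<and> t \<longlonglongrightarrow> 0 \<longrightarrow>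
               (\<exists>u :: real^'n. liminf (\<lambda>k. ereal (infdist (g pb xb + t k *\<^sub>R (v + pjac g pb xb *v u)) C / t k)) = 0)"
    and A2: "\<forall>v \<in> image_deriv g \<zeta> pb xb. \<forall>u :: real^'n.
               (v, u) \<noteq> (0, 0) \<and> v + pjac g pb xb *v u \<in> tangent_cone C (g pb xb) \<longrightarrow>
               (\<forall>y. y \<in> dir_normal_cone C (g pb xb) (v + pjac g pb xb *v u) \<and>
                    transpose (pjac g pb xb) *v y = 0 \<longrightarrow> y = 0)"
    and H2: "\<And>k. 0 < \<delta> k"
    and H3: "\<And>k x. norm (x - xb) < \<delta> k \<Longrightarrow> norm (pjac g (pk k) x - pjac g pb xb) < 1 / (real k + 2)"
    and H3': "\<And>k x. norm (x - xb) < \<delta> k \<Longrightarrow> (g (pk k) has_derivative (\<lambda>h. pjac g (pk k) x *v h)) (at x)"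
    and H4: "\<And>k. norm (g (pk k) xb - g pb xb) < 1 / (real k + 2)"
    and H4b: "\<And>k. norm (g (pk k) xb - g pb xb) * (real k + 2) < \<delta> k"
    and H5: "\<And>k. \<bar>\<zeta> (pk k) - \<zeta> pb\<bar> < 1 / (real k + 2)"
    and H6: "\<And>k. norm (xt k - xb) < \<delta> k" "\<And>k. norm (xt k - xb) < 2 / (real k + 2)"
    and H7: "\<And>k. cc k \<in> C" "\<And>k. g (pk k) (xt k) \<noteq> cc k"
      "\<And>k. infdist (g (pk k) (xt k)) C = norm (g (pk k) (xt k) - cc k)"
      "\<And>k. infdist (g (pk k) (xt k)) C < 1 / (real k + 2)"
    and H8: "\<And>k z. norm (z - xb) \<le> \<delta> k \<Longrightarrow> infdist (g (pk k) (xt k)) C \<le> infdist (g (pk k) z) C + (1 / (real k + 2)) * norm (z - xt k)"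
    and H9: "\<And>k. (1 / norm (g (pk k) (xt k) - cc k)) *\<^sub>R (g (pk k) (xt k) - cc k) \<in> regular_normal_cone C (cc k)"
    and H10: "\<And>k. norm (transpose (pjac g (pk k) (xt k)) *v ((1 / norm (g (pk k) (xt k) - cc k)) *\<^sub>R (g (pk k) (xt k) - cc k))) \<le> 1 / (real k + 2)"
  shows False
proof -
  define A where "A = pjac g pb xb"
  define gb where "gb = g pb xb"
  define m where "m k = real k + 2" for k
  define y where "y k = g (pk k) (xt k)" for k
  define ph where "ph k = norm (y k - cc k)" for k
  define tau where "tau k = norm (g (pk k) xb - gb)" for k
  define s where "s k = tau k + norm (xt k - xb) + ph k" for k
  define lam where "lam k = (1 / ph k) *\<^sub>R (y k - cc k)" for k
  define d where "d k = (1 / s k) *\<^sub>R (g (pk k) xb - gb)" for k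
  define b where "b k = (1 / s k) *\<^sub>R (xt k - xb)" for k
  define beta where "beta k = ph k / s k" for k
  define J where "J k = pjac g (pk k) (xt k)" for k
  define c0 where "c0 = real CARD('l) * real CARD('n)"
  define e where "e k = g (pk k) (xt k) - g (pk k) xb - A *v (xt k - xb)" for k
  have mpos: "m k \<ge> 2" for k by (simp add: m_def)
  have m_lim: "(\<lambda>k. 1 / m k) \<longlonglongrightarrow> 0" unfolding m_def by (rule inv_m_lim)
  have c0pos: "c0 \<ge> 0" by (simp add: c0_def)
  have ph_pos: "ph k > 0" for k using H7(2)[of k] by (simp add: ph_def y_def)
  have ph_inf: "infdist (g (pk k) (xt k)) C = ph k" for k using H7(3) by (simp add: ph_def y_def)
  have tau_nn: "tau k \<ge> 0" for k by (simp add: tau_def)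
  have s_pos: "s k > 0" for k using ph_pos[of k] tau_nn[of k] by (simp add: s_def add_nonneg_pos)
  have lam_norm: "norm (lam k) = 1" for k using ph_pos[of k] by (simp add: lam_def ph_def)
  have nd: "norm (d k) = tau k / s k" for k using s_pos[of k] by (simp add: d_def tau_def)
  have nb: "norm (b k) = norm (xt k - xb) / s k" for k using s_pos[of k] by (simp add: b_def)
  have sum1: "norm (d k) + norm (b k) + beta k = 1" for k
    using s_pos[of k] by (simp add: nd nb beta_def s_def add_divide_distrib[symmetric])
  have beta_nn: "beta k \<ge> 0" for k using ph_pos[of k] s_pos[of k] by (simp add: beta_def)
  have dle: "norm (d k) \<le> 1" "norm (b k) \<le> 1" "beta k \<le> 1" for k
    using sum1[of k] beta_nn[of k] norm_ge_zero[of "d k"] norm_ge_zero[of "b k"] by linarith+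
  have tau_le_s: "tau k \<le> s k" and xt_le_s: "norm (xt k - xb) \<le> s k" for k
    using ph_pos[of k] tau_nn[of k] by (simp_all add: s_def)
  have s_lim: "s \<longlonglongrightarrow> 0"
  proof (rule tendsto_bound0[where e="\<lambda>k. 4 * (1 / m k)"])
    show "\<forall>\<^sub>F k in sequentially. norm (s k - 0) \<le> 4 * (1 / m k)"
    proof (intro always_eventually allI)
      fix k
      have "tau k < 1 / m k" using H4[of k] by (simp add: tau_def gb_def m_def)
      moreover have "norm (xt k - xb) < 2 / m k" using H6(2)[of k] by (simp add: m_def)
      moreover have "ph k < 1 / m k" using H7(4)[of k] ph_inf[of k] by (simp add: m_def)
      ultimately show "norm (s k - 0) \<le> 4 * (1 / m k)" using s_pos[of k] by (simp add: s_def)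
    qed
    show "(\<lambda>k. 4 * (1 / m k)) \<longlonglongrightarrow> 0" using tendsto_mult_right_zero[OF m_lim] by simp
  qed
  have J_lim: "J \<longlonglongrightarrow> A"
  proof (rule tendsto_bound0[where e="\<lambda>k. 1 / m k"])
    show "\<forall>\<^sub>F k in sequentially. norm (J k - A) \<le> 1 / m k"
      using H3[OF H6(1)] by (intro always_eventually allI) (simp add: J_def A_def m_def less_imp_le)
  qed (rule m_lim)
  have xt_ball: "xt k \<in> ball xb (\<delta> k)" for k using H6(1)[of k] by (simp add: dist_norm norm_minus_commute)
  have e_bd: "norm (e k) \<le> c0 * (1 / m k) * norm (xt k - xb)" for k
  proof -
    have "norm (g (pk k) (xt k) - g (pk k) xb - A *v (xt k - xb)) \<le> (real CARD('l) * real CARD('n) * (1 / m k)) * norm (xt k - xb)"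
    proof (rule mvt_unif[where J="\<lambda>x. pjac g (pk k) x" and r="\<delta> k"])
      fix x assume "x \<in> ball xb (\<delta> k)"
      hence x: "norm (x - xb) < \<delta> k" by (simp add: dist_norm norm_minus_commute)
      show "(g (pk k) has_derivative (\<lambda>h. pjac g (pk k) x *v h)) (at x)" by (rule H3'[OF x])
      show "norm (pjac g (pk k) x - A) \<le> 1 / m k" using H3[OF x] by (simp add: A_def m_def)
    qed (rule xt_ball)
    thus ?thesis by (simp add: e_def c0_def)
  qed
  have decomp: "cc k - gb = s k *\<^sub>R (d k + A *v b k + (1 / s k) *\<^sub>R e k - beta k *\<^sub>R lam k)" for k
  proof -
    have sk: "s k \<noteq> 0" using s_pos[of k] by simp
    have "s k *\<^sub>R (d k + A *v b k + (1 / s k) *\<^sub>R e k - beta k *\<^sub>R lam k)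
        = s k *\<^sub>R d k + A *v (s k *\<^sub>R b k) + (s k * (1 / s k)) *\<^sub>R e k - (s k * beta k) *\<^sub>R lam k"
      by (simp add: algebra_simps)
    also have "\<dots> = (g (pk k) xb - gb) + A *v (xt k - xb) + e k - (y k - cc k)"
      using sk ph_pos[of k] by (simp add: d_def b_def beta_def lam_def)
    also have "\<dots> = cc k - gb" by (simp add: e_def y_def)
    finally show ?thesis by simp
  qed
  define T where "T k = (lam k, d k, b k)" for k
  have "bounded (range T)"
  proof (rule boundedI)
    fix z assume "z \<in> range T"
    then obtain k where z: "z = T k" by blast
    have "norm z \<le> norm (lam k) + (norm (d k) + norm (b k))" unfolding z T_def
      by (meson add_left_mono norm_Pair_le order_trans)
    thus "norm z \<le> 3" using lam_norm[of k] dle[of k] by linarith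
  qed
  then obtain L r where r: "strict_mono r" and Tlim: "(T \<circ> r) \<longlonglongrightarrow> L"
    using bounded_imp_convergent_subsequence by blast
  define lam0 where "lam0 = fst L"
  define v1 where "v1 = fst (snd L)"
  define u1 where "u1 = snd (snd L)"
  have lam_r: "(lam \<circ> r) \<longlonglongrightarrow> lam0" using tendsto_fst[OF Tlim] by (simp add: lam0_def T_def o_def)
  have d_r: "(d \<circ> r) \<longlonglongrightarrow> v1" using tendsto_fst[OF tendsto_snd[OF Tlim]] by (simp add: v1_def T_def o_def)
  have b_r: "(b \<circ> r) \<longlonglongrightarrow> u1" using tendsto_snd[OF tendsto_snd[OF Tlim]] by (simp add: u1_def T_def o_def)
  have gen: "\<exists>N. (\<forall>j\<ge>N. tau (q j) > 0) \<and>
      ((\<lambda>j. (1 / tau (q j)) *\<^sub>R (g (pk (q j)) xb - gb)) \<longlonglongrightarrow> (1 / norm v) *\<^sub>R v) \<and>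
      (1 / norm v) *\<^sub>R v \<in> image_deriv_gen g \<zeta> pb xb"
    if vne: "v \<noteq> 0" and q: "strict_mono q" and dq: "(d \<circ> q) \<longlonglongrightarrow> v" for q v
  proof -
    have "(\<lambda>j. norm (d (q j))) \<longlonglongrightarrow> norm v" using tendsto_norm[OF dq] by (simp add: o_def)
    moreover have "norm v > 0" using vne by simp
    ultimately have "eventually (\<lambda>j. norm (d (q j)) > 0) sequentially" by (rule order_tendstoD(1))
    then obtain N where N: "\<And>j. j \<ge> N \<Longrightarrow> norm (d (q j)) > 0" by (auto simp: eventually_sequentially)
    have tpos: "tau (q j) > 0" if "j \<ge> N" for j using N[OF that] nd[of "q j"] s_pos[of "q j"]
      by (simp add: zero_less_divide_iff)
    have eq: "(1 / norm (d (q j))) *\<^sub>R d (q j) = (1 / tau (q j)) *\<^sub>R (g (pk (q j)) xb - gb)" if "j \<ge> N" for j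
      using tpos[OF that] s_pos[of "q j"] by (simp add: nd d_def tau_def)
    have "(\<lambda>j. (1 / norm (d (q j))) *\<^sub>R d (q j)) \<longlonglongrightarrow> (1 / norm v) *\<^sub>R v"
      using dq vne by (intro tendsto_intros) (auto simp: o_def)
    hence lim: "(\<lambda>j. (1 / tau (q j)) *\<^sub>R (g (pk (q j)) xb - gb)) \<longlonglongrightarrow> (1 / norm v) *\<^sub>R v"
      by (rule Lim_transform_eventually) (auto simp: eventually_sequentially intro!: exI[of _ N] eq)
    have "(1 / norm v) *\<^sub>R v \<in> image_deriv_gen g \<zeta> pb xb"
    proof (rule gen_from_seq[OF q, where N=N])
      fix k
      have x0: "norm (xb - xb) < \<delta> k" using H2[of k] by simp
      show "g (pk k) differentiable at xb" using H3'[OF x0] by (rule differentiableI)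
      show "norm (g (pk k) xb - g pb xb) < 1 / (real k + 2)" by (rule H4)
      show "norm (pjac g (pk k) xb - pjac g pb xb) < 1 / (real k + 2)" by (rule H3[OF x0])
      show "\<bar>\<zeta> (pk k) - \<zeta> pb\<bar> < 1 / (real k + 2)" by (rule H5)
    next
      fix j assume "N \<le> j" thus "0 < norm (g (pk (q j)) xb - g pb xb)" using tpos by (simp add: tau_def gb_def)
    next
      show "(\<lambda>j. (1 / norm (g (pk (q j)) xb - g pb xb)) *\<^sub>R (g (pk (q j)) xb - g pb xb)) \<longlonglongrightarrow> (1 / norm v) *\<^sub>R v"
        using lim by (simp add: tau_def gb_def)
    qed
    with lim tpos show ?thesis by blast
  qed
  have fin: False if \<sigma>: "strict_mono \<sigma>" and bl: "(\<lambda>j. beta (r (\<sigma> j))) \<longlonglongrightarrow> 0" for \<sigma>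
  proof -
    define q where "q = r \<circ> \<sigma>"
    have q: "strict_mono q" unfolding q_def by (rule strict_mono_o[OF r \<sigma>])
    have lam_q: "(\<lambda>j. lam (q j)) \<longlonglongrightarrow> lam0" using LIMSEQ_subseq_LIMSEQ[OF lam_r \<sigma>] by (simp add: q_def o_def)
    have d_q: "(d \<circ> q) \<longlonglongrightarrow> v1" using LIMSEQ_subseq_LIMSEQ[OF d_r \<sigma>] by (simp add: q_def o_assoc)
    have d_q': "(\<lambda>j. d (q j)) \<longlonglongrightarrow> v1" using d_q by (simp add: o_def)
    have b_q: "(\<lambda>j. b (q j)) \<longlonglongrightarrow> u1" using LIMSEQ_subseq_LIMSEQ[OF b_r \<sigma>] by (simp add: q_def o_def)
    have s_q: "(\<lambda>j. s (q j)) \<longlonglongrightarrow> 0" using LIMSEQ_subseq_LIMSEQ[OF s_lim q] by (simp add: o_def)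
    have J_q: "(\<lambda>j. J (q j)) \<longlonglongrightarrow> A" using LIMSEQ_subseq_LIMSEQ[OF J_lim q] by (simp add: o_def)
    have m_q: "(\<lambda>j. 1 / m (q j)) \<longlonglongrightarrow> 0" using LIMSEQ_subseq_LIMSEQ[OF m_lim q] by (simp add: o_def)
    have beta_q: "(\<lambda>j. beta (q j)) \<longlonglongrightarrow> 0" using bl by (simp add: q_def)
    have n1: "norm lam0 = 1"
    proof -
      have "(\<lambda>j. norm (lam (q j))) \<longlonglongrightarrow> norm lam0" by (rule tendsto_norm[OF lam_q])
      moreover have "(\<lambda>j. norm (lam (q j))) \<longlonglongrightarrow> 1" by (simp add: lam_norm)
      ultimately show ?thesis by (rule LIMSEQ_unique)
    qed
    have AT: "transpose A *v lam0 = 0"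
    proof -
      have tq: "(\<lambda>j. transpose (J (q j))) \<longlonglongrightarrow> transpose A"
        unfolding transpose_def by (intro tendsto_intros J_q)
      have "(\<lambda>j. transpose (J (q j)) *v lam (q j)) \<longlonglongrightarrow> transpose A *v lam0"
        by (rule tendsto_mv[OF tq lam_q])
      moreover have "(\<lambda>j. transpose (J (q j)) *v lam (q j)) \<longlonglongrightarrow> 0"
      proof (rule tendsto_bound0[where e="\<lambda>j. 1 / m (q j)"])
        show "\<forall>\<^sub>F j in sequentially. norm (transpose (J (q j)) *v lam (q j) - 0) \<le> 1 / m (q j)"
          using H10 by (intro always_eventually allI) (simp add: J_def lam_def ph_def y_def m_def)
      qed (rule m_q)
      ultimately show ?thesis by (rule LIMSEQ_unique)
    qed
    define w where "w j = d (q j) + A *v b (q j) + (1 / s (q j)) *\<^sub>R e (q j) - beta (q j) *\<^sub>R lam (q j)" for j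
    have es: "(\<lambda>j. (1 / s (q j)) *\<^sub>R e (q j)) \<longlonglongrightarrow> 0"
    proof (rule tendsto_bound0[where e="\<lambda>j. c0 * (1 / m (q j))"])
      show "\<forall>\<^sub>F j in sequentially. norm ((1 / s (q j)) *\<^sub>R e (q j) - 0) \<le> c0 * (1 / m (q j))"
      proof (intro always_eventually allI)
        fix j
        define k where "k = q j"
        have sp: "s k > 0" by (rule s_pos)
        have "norm ((1 / s k) *\<^sub>R e k) = norm (e k) / s k" using sp by simp
        also have "\<dots> \<le> (c0 * (1 / m k) * norm (xt k - xb)) / s k"
          using e_bd[of k] sp by (intro divide_right_mono) auto
        also have "\<dots> = (c0 * (1 / m k)) * (norm (xt k - xb) / s k)" by simp
        also have "\<dots> \<le> (c0 * (1 / m k)) * 1"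
          using xt_le_s[of k] sp c0pos mpos[of k] by (intro mult_left_mono) auto
        finally show "norm ((1 / s (q j)) *\<^sub>R e (q j) - 0) \<le> c0 * (1 / m (q j))" by (simp add: k_def)
      qed
      show "(\<lambda>j. c0 * (1 / m (q j))) \<longlonglongrightarrow> 0" using tendsto_mult_right_zero[OF m_q] by simp
    qed
    have w_lim: "w \<longlonglongrightarrow> v1 + A *v u1"
    proof -
      have "w \<longlonglongrightarrow> v1 + A *v u1 + 0 - 0 *\<^sub>R lam0"
        unfolding w_def by (intro tendsto_intros d_q' tendsto_mv[OF tendsto_const b_q] es beta_q lam_q)
      thus ?thesis by simp
    qed
    have cc_eq: "gb + s (q j) *\<^sub>R w j = cc (q j)" for j using decomp[of "q j"] unfolding w_def by (metis add.commute diff_add_cancel)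
    have tan: "v1 + A *v u1 \<in> tangent_cone C gb"
      unfolding tangent_cone_def
      by (intro CollectI exI[of _ "\<lambda>j. s (q j)"] exI[of _ w] conjI allI s_pos s_q w_lim)
         (simp add: cc_eq H7(1))
    have dn: "lam0 \<in> dir_normal_cone C gb (v1 + A *v u1)"
      unfolding dir_normal_cone_def
      by (intro CollectI exI[of _ "\<lambda>j. s (q j)"] exI[of _ w] exI[of _ "\<lambda>j. lam (q j)"] conjI allI s_pos s_q w_lim lam_q)
         (simp_all add: cc_eq H7(1) H9 lam_def ph_def y_def)
    have nz: "(v1, u1) \<noteq> (0, 0)"
    proof -
      have "(\<lambda>j. norm (d (q j)) + norm (b (q j)) + beta (q j)) \<longlonglongrightarrow> norm v1 + norm u1 + 0"
        by (intro tendsto_intros d_q' b_q beta_q)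
      moreover have "(\<lambda>j. norm (d (q j)) + norm (b (q j)) + beta (q j)) \<longlonglongrightarrow> 1" by (simp add: sum1)
      ultimately have "norm v1 + norm u1 + 0 = 1" by (rule LIMSEQ_unique)
      thus ?thesis by auto
    qed
    have v1D: "v1 \<in> image_deriv g \<zeta> pb xb"
    proof (cases "v1 = 0")
      case True thus ?thesis by (simp add: image_deriv_zero)
    next
      case False
      then obtain N where "(1 / norm v1) *\<^sub>R v1 \<in> image_deriv_gen g \<zeta> pb xb" using gen[OF False q d_q] by blast
      hence "(1 / norm v1) *\<^sub>R v1 \<in> image_deriv g \<zeta> pb xb" by (rule subsetD[OF gen_sub_image_deriv])
      from image_deriv_cone[OF this, of "norm v1"] show ?thesis using False by simp
    qed
    have "lam0 = 0" using A2 v1D nz tan dn AT by (simp add: A_def gb_def)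
    thus False using n1 by simp
  qed
  show False
  proof (cases "v1 = 0")
    case True
    have bb: "beta k \<le> norm (d k) + 1 / m k" for k
    proof -
      have x0: "norm (xb - xb) \<le> \<delta> k" using H2[of k] by simp
      have "ph k \<le> infdist (g (pk k) xb) C + (1 / m k) * norm (xb - xt k)"
        using H8[OF x0] ph_inf[of k] by (simp add: m_def)
      moreover have "infdist (g (pk k) xb) C \<le> tau k"
        using infdist_le[OF gbC, of "g (pk k) xb"] by (simp add: tau_def gb_def dist_norm)
      moreover have "(1 / m k) * norm (xb - xt k) \<le> (1 / m k) * s k"
        using xt_le_s[of k] mpos[of k] by (intro mult_left_mono) (auto simp: norm_minus_commute)
      ultimately have "ph k \<le> tau k + (1 / m k) * s k" by linarith
      hence "ph k / s k \<le> (tau k + (1 / m k) * s k) / s k" using s_pos[of k] by (intro divide_right_mono) auto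
      also have "\<dots> = tau k / s k + 1 / m k" using s_pos[of k] by (simp add: field_simps)
      finally show ?thesis by (simp add: beta_def nd)
    qed
    have "(\<lambda>j. beta (r j)) \<longlonglongrightarrow> 0"
    proof (rule tendsto_bound0[where e="\<lambda>j. norm (d (r j)) + 1 / m (r j)"])
      show "\<forall>\<^sub>F j in sequentially. norm (beta (r j) - 0) \<le> norm (d (r j)) + 1 / m (r j)"
        using bb beta_nn by (intro always_eventually allI) simp
      have "(\<lambda>j. norm (d (r j)) + 1 / m (r j)) \<longlonglongrightarrow> norm v1 + 0"
        using d_r LIMSEQ_subseq_LIMSEQ[OF m_lim r] by (intro tendsto_intros) (auto simp: o_def)
      thus "(\<lambda>j. norm (d (r j)) + 1 / m (r j)) \<longlonglongrightarrow> 0" using True by simp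
    qed
    thus False using fin[of "\<lambda>j. j"] by (simp add: strict_mono_def)
  next
    case False
    define v0 where "v0 = (1 / norm v1) *\<^sub>R v1"
    obtain N where tpos: "\<And>j. j \<ge> N \<Longrightarrow> tau (r j) > 0"
      and lim_r: "(\<lambda>j. (1 / tau (r j)) *\<^sub>R (g (pk (r j)) xb - gb)) \<longlonglongrightarrow> v0"
      and v0g: "v0 \<in> image_deriv_gen g \<zeta> pb xb"
      using gen[OF False r d_r] unfolding v0_def by blast
    have v0D: "v0 \<in> image_deriv g \<zeta> pb xb" using v0g by (rule subsetD[OF gen_sub_image_deriv])
    define t where "t j = tau (r (j + N))" for j
    have t_pos: "\<forall>k. 0 < t k" using tpos by (simp add: t_def)
    have t_lim: "t \<longlonglongrightarrow> 0"
    proof (rule tendsto_bound0[where e="\<lambda>j. s (r (j + N))"])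
      show "\<forall>\<^sub>F j in sequentially. norm (t j - 0) \<le> s (r (j + N))"
        using tau_le_s tau_nn by (intro always_eventually allI) (simp add: t_def)
      have "(\<lambda>j. (s \<circ> r) (j + N)) \<longlonglongrightarrow> 0" by (rule LIMSEQ_ignore_initial_segment[OF LIMSEQ_subseq_LIMSEQ[OF s_lim r]])
      thus "(\<lambda>j. s (r (j + N))) \<longlonglongrightarrow> 0" by (simp add: o_def)
    qed
    obtain u0 where u0: "liminf (\<lambda>k. ereal (infdist (gb + t k *\<^sub>R (v0 + A *v u0)) C / t k)) = 0"
    proof -
      have "\<exists>u. liminf (\<lambda>k. ereal (infdist (g pb xb + t k *\<^sub>R (v0 + pjac g pb xb *v u)) C / t k)) = 0"
        using A1 v0D t_pos t_lim by blast
      thus ?thesis using that by (auto simp: gb_def A_def)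
    qed
    define X where "X k = infdist (gb + t k *\<^sub>R (v0 + A *v u0)) C / t k" for k
    obtain \<sigma>2 where s2: "strict_mono \<sigma>2" and X2: "(X \<circ> \<sigma>2) \<longlonglongrightarrow> 0"
      using liminf_zero_subseq[of X] u0 unfolding X_def by blast
    define \<sigma> where "\<sigma> j = \<sigma>2 j + N" for j
    have \<sigma>: "strict_mono \<sigma>" using s2 by (simp add: strict_mono_def \<sigma>_def)
    define Dv where "Dv k = norm ((1 / tau k) *\<^sub>R (g (pk k) xb - gb) - v0)" for k
    obtain N' :: nat where N': "norm u0 \<le> real N'" using real_arch_simple by blast
    have bound: "beta (r (\<sigma> j)) \<le> X (\<sigma>2 j) + c0 * (1 / m (r (\<sigma> j))) * norm u0 + Dv (r (\<sigma> j))
                   + (1 / m (r (\<sigma> j))) * (norm u0 + 1)" if jN: "j \<ge> N'" for j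
    proof -
      define k where "k = r (\<sigma> j)"
      have \<tau>: "tau k > 0" unfolding k_def by (rule tpos) (simp add: \<sigma>_def)
      have Xeq: "X (\<sigma>2 j) = infdist (gb + tau k *\<^sub>R (v0 + A *v u0)) C / tau k"
        by (simp add: X_def t_def k_def \<sigma>_def)
      have "j \<le> k" unfolding k_def using seq_suble[OF strict_mono_o[OF r \<sigma>], of j] by simp
      hence mk: "norm u0 \<le> m k" using N' jN by (simp add: m_def)
      define z where "z = xb + tau k *\<^sub>R u0"
      have nz: "norm (z - xb) = tau k * norm u0" using \<tau> by (simp add: z_def)
      have "tau k * norm u0 \<le> tau k * m k" using mk \<tau> by (intro mult_left_mono) auto
      also have "\<dots> < \<delta> k" using H4b[of k] by (simp add: tau_def gb_def m_def)
      finally have zd: "norm (z - xb) < \<delta> k" using nz by simp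
      have mvz: "norm (g (pk k) z - g (pk k) xb - A *v (z - xb)) \<le> c0 * (1 / m k) * norm (z - xb)"
      proof -
        have "norm (g (pk k) z - g (pk k) xb - A *v (z - xb)) \<le> (real CARD('l) * real CARD('n) * (1 / m k)) * norm (z - xb)"
        proof (rule mvt_unif[where J="\<lambda>x. pjac g (pk k) x" and r="\<delta> k"])
          fix x assume "x \<in> ball xb (\<delta> k)"
          hence x: "norm (x - xb) < \<delta> k" by (simp add: dist_norm norm_minus_commute)
          show "(g (pk k) has_derivative (\<lambda>h. pjac g (pk k) x *v h)) (at x)" by (rule H3'[OF x])
          show "norm (pjac g (pk k) x - A) \<le> 1 / m k" using H3[OF x] by (simp add: A_def m_def)
        next
          show "z \<in> ball xb (\<delta> k)" using zd by (simp add: dist_norm norm_minus_commute)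
        qed
        thus ?thesis by (simp add: c0_def)
      qed
      have split: "g (pk k) z - (gb + tau k *\<^sub>R (v0 + A *v u0))
          = (g (pk k) z - g (pk k) xb - A *v (z - xb)) + ((g (pk k) xb - gb) - tau k *\<^sub>R v0)"
      proof -
        have eqA: "A *v (z - xb) = tau k *\<^sub>R (A *v u0)" by (simp add: z_def matrix_vector_mult_scaleR)
        show ?thesis by (simp only: eqA scaleR_add_right) (simp add: algebra_simps)
      qed
      have dv: "norm ((g (pk k) xb - gb) - tau k *\<^sub>R v0) = tau k * Dv k"
      proof -
        have "(g (pk k) xb - gb) - tau k *\<^sub>R v0 = tau k *\<^sub>R ((1 / tau k) *\<^sub>R (g (pk k) xb - gb) - v0)"
          using \<tau> by (simp add: algebra_simps)
        thus ?thesis using \<tau> by (simp add: Dv_def)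
      qed
      define Q where "Q = X (\<sigma>2 j) + c0 * (1 / m k) * norm u0 + Dv k"
      have Qnn: "Q \<ge> 0"
        using c0pos mpos[of k] \<tau> by (simp add: Q_def Xeq Dv_def infdist_nonneg)
      have "infdist (g (pk k) z) C \<le> infdist (gb + tau k *\<^sub>R (v0 + A *v u0)) C + norm (g (pk k) z - (gb + tau k *\<^sub>R (v0 + A *v u0)))"
        using infdist_triangle[of "g (pk k) z" C "gb + tau k *\<^sub>R (v0 + A *v u0)"] by (simp add: dist_norm)
      also have "norm (g (pk k) z - (gb + tau k *\<^sub>R (v0 + A *v u0))) \<le> c0 * (1 / m k) * (tau k * norm u0) + tau k * Dv k"
      proof -
        have "norm (g (pk k) z - (gb + tau k *\<^sub>R (v0 + A *v u0))) \<le> norm (g (pk k) z - g (pk k) xb - A *v (z - xb)) + norm ((g (pk k) xb - gb) - tau k *\<^sub>R v0)"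
          unfolding split by (rule norm_triangle_ineq)
        thus ?thesis using mvz nz dv by simp
      qed
      finally have "infdist (g (pk k) z) C \<le> tau k * X (\<sigma>2 j) + c0 * (1 / m k) * (tau k * norm u0) + tau k * Dv k"
        using \<tau> by (simp add: Xeq)
      hence iz: "infdist (g (pk k) z) C \<le> tau k * Q" by (simp add: Q_def algebra_simps)
      have "ph k \<le> infdist (g (pk k) z) C + (1 / m k) * norm (z - xt k)"
        using H8[of z k] zd ph_inf[of k] by (simp add: m_def)
      moreover have "norm (z - xt k) \<le> tau k * norm u0 + norm (xt k - xb)"
        using norm_triangle_ineq4[of "z - xb" "xt k - xb"] nz by simp
      hence "(1 / m k) * norm (z - xt k) \<le> (1 / m k) * (tau k * norm u0 + norm (xt k - xb))"
        using mpos[of k] by (intro mult_left_mono) auto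
      ultimately have ph_b: "ph k \<le> tau k * Q + (1 / m k) * (tau k * norm u0 + norm (xt k - xb))"
        using iz by linarith
      have sp: "s k > 0" by (rule s_pos)
      have "beta k \<le> (tau k * Q + (1 / m k) * (tau k * norm u0 + norm (xt k - xb))) / s k"
        unfolding beta_def using ph_b sp by (intro divide_right_mono) auto
      also have "\<dots> = (tau k / s k) * Q + (1 / m k) * ((tau k / s k) * norm u0 + norm (xt k - xb) / s k)"
        using sp mpos[of k] by (simp add: field_simps)
      also have "\<dots> \<le> Q + (1 / m k) * (norm u0 + 1)"
      proof -
        have a1: "tau k / s k \<le> 1" "norm (xt k - xb) / s k \<le> 1" "tau k / s k \<ge> 0"
          using tau_le_s[of k] xt_le_s[of k] sp tau_nn[of k] by auto
        have "(tau k / s k) * Q \<le> Q" using a1 Qnn by (rule_tac mult_left_le_one_le) auto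
        moreover have "(tau k / s k) * norm u0 + norm (xt k - xb) / s k \<le> norm u0 + 1"
          using a1 mult_left_le_one_le[of "norm u0" "tau k / s k"] by (intro add_mono) auto
        hence "(1 / m k) * ((tau k / s k) * norm u0 + norm (xt k - xb) / s k) \<le> (1 / m k) * (norm u0 + 1)"
          using mpos[of k] by (intro mult_left_mono) auto
        ultimately show ?thesis by linarith
      qed
      finally show ?thesis by (simp add: Q_def k_def)
    qed
    have "(\<lambda>j. beta (r (\<sigma> j))) \<longlonglongrightarrow> 0"
    proof (rule tendsto_bound0[where e="\<lambda>j. X (\<sigma>2 j) + c0 * (1 / m (r (\<sigma> j))) * norm u0 + Dv (r (\<sigma> j))
                   + (1 / m (r (\<sigma> j))) * (norm u0 + 1)"])
      show "\<forall>\<^sub>F j in sequentially. norm (beta (r (\<sigma> j)) - 0) \<le> X (\<sigma>2 j) + c0 * (1 / m (r (\<sigma> j))) * norm u0 + Dv (r (\<sigma> j))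
                   + (1 / m (r (\<sigma> j))) * (norm u0 + 1)"
        unfolding eventually_sequentially using bound beta_nn by (intro exI[of _ N']) auto
      have mq: "(\<lambda>j. 1 / m (r (\<sigma> j))) \<longlonglongrightarrow> 0"
        using LIMSEQ_subseq_LIMSEQ[OF m_lim strict_mono_o[OF r \<sigma>]] by (simp add: o_def)
      have X2': "(\<lambda>j. X (\<sigma>2 j)) \<longlonglongrightarrow> 0" using X2 by (simp add: o_def)
      have "(\<lambda>j. (1 / tau (r (\<sigma> j))) *\<^sub>R (g (pk (r (\<sigma> j))) xb - gb)) \<longlonglongrightarrow> v0"
        using LIMSEQ_subseq_LIMSEQ[OF lim_r \<sigma>] by (simp add: o_def)
      hence Dq: "(\<lambda>j. Dv (r (\<sigma> j))) \<longlonglongrightarrow> 0"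
        unfolding Dv_def by (intro tendsto_norm_zero LIM_zero)
      have "(\<lambda>j. X (\<sigma>2 j) + c0 * (1 / m (r (\<sigma> j))) * norm u0 + Dv (r (\<sigma> j))
                   + (1 / m (r (\<sigma> j))) * (norm u0 + 1)) \<longlonglongrightarrow> 0 + c0 * 0 * norm u0 + 0 + 0 * (norm u0 + 1)"
        by (intro tendsto_intros X2' mq Dq)
      thus "(\<lambda>j. X (\<sigma>2 j) + c0 * (1 / m (r (\<sigma> j))) * norm u0 + Dv (r (\<sigma> j))
                   + (1 / m (r (\<sigma> j))) * (norm u0 + 1)) \<longlonglongrightarrow> 0" by simp
    qed
    thus False by (rule fin[OF \<sigma>])
  qed
qed


lemma nbhd_lemma:
  fixes g :: "'p::topological_space \<Rightarrow> real^'n \<Rightarrow> real^'l"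
  assumes lg: "((\<lambda>(p, x). g p x) \<longlongrightarrow> g pb xb) (at (pb, xb))"
    and lj: "((\<lambda>(p, x). pjac g p x) \<longlongrightarrow> pjac g pb xb) (at (pb, xb))" and e: "\<epsilon> > 0"
  obtains S \<delta> where "open S" "pb \<in> S" "\<delta> > 0"
    "\<And>p x. p \<in> S \<Longrightarrow> norm (x - xb) < \<delta> \<Longrightarrow> norm (pjac g p x - pjac g pb xb) < \<epsilon> \<and> norm (g p x - g pb xb) < \<epsilon>"
proof -
  have "eventually (\<lambda>z. dist ((\<lambda>(p, x). pjac g p x) z) (pjac g pb xb) < \<epsilon> \<and> dist ((\<lambda>(p, x). g p x) z) (g pb xb) < \<epsilon>) (at (pb, xb))"
    using tendstoD[OF lj e] tendstoD[OF lg e] by (rule eventually_conj)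
  then obtain W where W: "open W" "(pb, xb) \<in> W"
    and PW: "\<And>z. z \<in> W \<Longrightarrow> z \<noteq> (pb, xb) \<Longrightarrow> dist ((\<lambda>(p, x). pjac g p x) z) (pjac g pb xb) < \<epsilon> \<and> dist ((\<lambda>(p, x). g p x) z) (g pb xb) < \<epsilon>"
    unfolding eventually_at_topological by blast
  obtain S B where SB: "open S" "open B" "(pb, xb) \<in> S \<times> B" "S \<times> B \<subseteq> W"
    using open_prod_elim[OF W] by blast
  obtain \<delta> where d: "\<delta> > 0" "ball xb \<delta> \<subseteq> B" using SB(2,3) openE by blast
  show ?thesis
  proof (rule that[OF SB(1) _ d(1)])
    show "pb \<in> S" using SB(3) by simp
    fix p x assume p: "p \<in> S" and x: "norm (x - xb) < \<delta>"
    have "x \<in> B" using x d(2) by (auto simp: dist_norm norm_minus_commute)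
    hence z: "(p, x) \<in> W" using p SB(4) by blast
    show "norm (pjac g p x - pjac g pb xb) < \<epsilon> \<and> norm (g p x - g pb xb) < \<epsilon>"
    proof (cases "(p, x) = (pb, xb)")
      case True thus ?thesis using e by auto
    next
      case False thus ?thesis using PW[OF z False] by (simp add: dist_norm)
    qed
  qed
qed

lemma zeta_nbhd:
  fixes \<zeta> :: "'p::topological_space \<Rightarrow> real"
  assumes "(\<zeta> \<longlongrightarrow> \<zeta> pb) (at pb)" "\<epsilon> > 0"
  obtains S where "open S" "pb \<in> S" "\<And>p. p \<in> S \<Longrightarrow> \<bar>\<zeta> p - \<zeta> pb\<bar> < \<epsilon>"
proof -
  have "eventually (\<lambda>p. dist (\<zeta> p) (\<zeta> pb) < \<epsilon>) (at pb)" using tendstoD[OF assms] .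
  then obtain S where S: "open S" "pb \<in> S" "\<And>p. p \<in> S \<Longrightarrow> p \<noteq> pb \<Longrightarrow> dist (\<zeta> p) (\<zeta> pb) < \<epsilon>"
    unfolding eventually_at_topological by blast
  show ?thesis
  proof (rule that[OF S(1,2)])
    fix p assume "p \<in> S" thus "\<bar>\<zeta> p - \<zeta> pb\<bar> < \<epsilon>" using S(3) assms(2) by (cases "p = pb") (auto simp: dist_real_def)
  qed
qed

lemma step:
  fixes g :: "'p::topological_space \<Rightarrow> real^'n \<Rightarrow> real^'l"
    and C :: "(real^'l) set" and \<zeta> :: "'p \<Rightarrow> real" and pb :: 'p and xb :: "real^'n"
  assumes C_closed: "closed C" and gbC: "g pb xb \<in> C"
    and U0: "open U0" "xb \<in> U0" and V0: "open V0" "pb \<in> V0"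
    and dU: "\<And>p x. p \<in> V0 \<Longrightarrow> x \<in> U0 \<Longrightarrow> g p differentiable (at x)"
    and lg: "((\<lambda>(p, x). g p x) \<longlongrightarrow> g pb xb) (at (pb, xb))"
    and lj: "((\<lambda>(p, x). pjac g p x) \<longlongrightarrow> pjac g pb xb) (at (pb, xb))"
    and zc: "(\<zeta> \<longlongrightarrow> \<zeta> pb) (at pb)"
    and nrs: "\<not> robinson_stable g C pb xb"
  shows "\<exists>p xt c \<delta>. 0 < \<delta> \<and>
    (\<forall>x. norm (x - xb) < \<delta> \<longrightarrow> norm (pjac g p x - pjac g pb xb) < 1 / (real k + 2)) \<and>
    (\<forall>x. norm (x - xb) < \<delta> \<longrightarrow> (g p has_derivative (\<lambda>h. pjac g p x *v h)) (at x)) \<and>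
    norm (g p xb - g pb xb) < 1 / (real k + 2) \<and>
    norm (g p xb - g pb xb) * (real k + 2) < \<delta> \<and>
    \<bar>\<zeta> p - \<zeta> pb\<bar> < 1 / (real k + 2) \<and>
    norm (xt - xb) < \<delta> \<and> norm (xt - xb) < 2 / (real k + 2) \<and>
    c \<in> C \<and> g p xt \<noteq> c \<and> infdist (g p xt) C = norm (g p xt - c) \<and>
    infdist (g p xt) C < 1 / (real k + 2) \<and>
    (\<forall>z. norm (z - xb) \<le> \<delta> \<longrightarrow> infdist (g p xt) C \<le> infdist (g p z) C + (1 / (real k + 2)) * norm (z - xt)) \<and>
    (1 / norm (g p xt - c)) *\<^sub>R (g p xt - c) \<in> regular_normal_cone C c \<and>
    norm (transpose (pjac g p xt) *v ((1 / norm (g p xt - c)) *\<^sub>R (g p xt - c))) \<le> 1 / (real k + 2)"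
proof -
  define m where "m = real k + 2"
  have m2: "m \<ge> 2" by (simp add: m_def)
  define gb where "gb = g pb xb"
  define A where "A = pjac g pb xb"
  obtain \<rho> where rho: "\<rho> > 0" "cball xb \<rho> \<subseteq> U0" using U0 open_contains_cball by blast
  have m0: "1 / m > 0" using m2 by simp
  obtain S1 \<delta>1 where S1: "open S1" "pb \<in> S1" "\<delta>1 > 0"
    "\<And>p x. p \<in> S1 \<Longrightarrow> norm (x - xb) < \<delta>1 \<Longrightarrow> norm (pjac g p x - A) < 1 / m \<and> norm (g p x - gb) < 1 / m"
    by (rule nbhd_lemma[OF lg lj m0, folded A_def gb_def]) blast
  define \<delta>k where "\<delta>k = min \<delta>1 \<rho>"
  have dk: "\<delta>k > 0" "\<delta>k \<le> \<delta>1" "\<delta>k \<le> \<rho>" using S1(3) rho(1) by (auto simp: \<delta>k_def)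
  define \<epsilon>2 where "\<epsilon>2 = min (1 / (m * m)) (\<delta>k / (3 * m))"
  have e2: "\<epsilon>2 > 0" "\<epsilon>2 \<le> 1 / (m * m)" "\<epsilon>2 \<le> \<delta>k / (3 * m)" using dk m2 by (auto simp: \<epsilon>2_def)
  obtain S2 \<delta>2 where S2: "open S2" "pb \<in> S2" "\<delta>2 > 0"
    "\<And>p x. p \<in> S2 \<Longrightarrow> norm (x - xb) < \<delta>2 \<Longrightarrow> norm (pjac g p x - A) < \<epsilon>2 \<and> norm (g p x - gb) < \<epsilon>2"
    by (rule nbhd_lemma[OF lg lj e2(1), folded A_def gb_def]) blast
  obtain S3 where S3: "open S3" "pb \<in> S3" "\<And>p. p \<in> S3 \<Longrightarrow> \<bar>\<zeta> p - \<zeta> pb\<bar> < 1 / m"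
    by (rule zeta_nbhd[OF zc m0]) blast
  define r0 where "r0 = min (min (\<delta>k / 3) \<delta>2) (1 / m)"
  have r0: "r0 > 0" using dk S2(3) m2 by (simp add: r0_def)
  define V where "V = S1 \<inter> S2 \<inter> S3 \<inter> V0"
  have V: "open V" "pb \<in> V" using S1 S2 S3 V0 by (auto simp: V_def)
  have "\<not> (\<forall>p\<in>V. \<forall>x\<in>ball xb r0. Gam g C p \<noteq> {} \<and> infdist x (Gam g C p) \<le> (m * m) * infdist (g p x) C)"
  proof
    assume "\<forall>p\<in>V. \<forall>x\<in>ball xb r0. Gam g C p \<noteq> {} \<and> infdist x (Gam g C p) \<le> (m * m) * infdist (g p x) C"
    hence "robinson_stable g C pb xb" unfolding robinson_stable_def
    proof (intro exI[of _ "m * m"] conjI exI[of _ "ball xb r0"] exI[of _ V])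
      show "0 \<le> m * m" by simp
      show "xb \<in> ball xb r0" using r0 by simp
    qed (use V \<open>\<forall>p\<in>V. _\<close> in auto)
    thus False using nrs by simp
  qed
  then obtain p x where pV: "p \<in> V" and xU: "x \<in> ball xb r0"
    and bad: "\<not> (Gam g C p \<noteq> {} \<and> infdist x (Gam g C p) \<le> (m * m) * infdist (g p x) C)" by blast
  have xn: "norm (x - xb) < \<delta>k / 3" "norm (x - xb) < \<delta>2" "norm (x - xb) < 1 / m"
    using xU by (auto simp: r0_def dist_norm norm_minus_commute)
  have pS: "p \<in> S1" "p \<in> S2" "p \<in> S3" "p \<in> V0" using pV by (auto simp: V_def)
  have gx: "norm (g p x - gb) < \<epsilon>2" using S2(4)[OF pS(2) xn(2)] by simp
  have gxb: "norm (g p xb - gb) < \<epsilon>2" using S2(4)[OF pS(2), of xb] S2(3) by simp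
  have h3: "\<forall>x'. norm (x' - xb) < \<delta>k \<longrightarrow> norm (pjac g p x' - A) < 1 / m"
    using S1(4)[OF pS(1)] dk(2) by (meson less_le_trans)
  have inU: "x' \<in> U0" if "norm (x' - xb) \<le> \<delta>k" for x'
    using that dk(3) rho(2) by (auto simp: dist_norm norm_minus_commute subset_iff)
  have h3': "\<forall>x'. norm (x' - xb) < \<delta>k \<longrightarrow> (g p has_derivative (\<lambda>h. pjac g p x' *v h)) (at x')"
  proof (intro allI impI)
    fix x' assume "norm (x' - xb) < \<delta>k"
    hence "g p differentiable (at x')" using dU[OF pS(4) inU] by simp
    thus "(g p has_derivative (\<lambda>h. pjac g p x' *v h)) (at x')" unfolding pjac_def jacobian_works .
  qed
  define K where "K = cball xb \<delta>k"
  define \<phi> where "\<phi> z = infdist (g p z) C" for z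
  have cK: "compact K" by (simp add: K_def)
  have contK: "continuous_on K \<phi>"
  proof -
    have "g p differentiable_on K"
      by (rule differentiable_at_imp_differentiable_on) (use dU[OF pS(4) inU] in \<open>auto simp: K_def dist_norm norm_minus_commute\<close>)
    hence "continuous_on K (g p)" by (rule differentiable_imp_continuous_on)
    thus ?thesis unfolding \<phi>_def by (intro continuous_intros)
  qed
  have xK: "x \<in> K" using xn(1) dk(1) by (simp add: K_def dist_norm norm_minus_commute)
  have eta: "1 / m > 0" by (rule m0)
  obtain xt where xtK: "xt \<in> K" and ek1: "(1 / m) * dist xt x \<le> \<phi> x - \<phi> xt"
    and ek2: "\<And>z. z \<in> K \<Longrightarrow> \<phi> xt \<le> \<phi> z + (1 / m) * dist z xt"
    using ekeland_fin[OF cK contK xK eta] by blast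
  have phnn: "\<phi> z \<ge> 0" for z by (simp add: \<phi>_def infdist_nonneg)
  have phx: "\<phi> x < \<epsilon>2"
    using infdist_le[OF gbC, of "g p x"] gx by (simp add: \<phi>_def gb_def dist_norm)
  have dxt: "dist xt x \<le> m * \<phi> x"
  proof -
    have "(1 / m) * dist xt x \<le> \<phi> x" using ek1 phnn[of xt] by linarith
    thus ?thesis using m2 by (simp add: field_simps)
  qed
  have mphi: "m * \<phi> x < \<delta>k / 3" "m * \<phi> x < 1 / m"
  proof -
    have "m * \<phi> x < m * \<epsilon>2" using phx m2 by simp
    moreover have "m * \<epsilon>2 \<le> m * (\<delta>k / (3 * m))" using e2(3) m2 by (intro mult_left_mono) auto
    moreover have "m * \<epsilon>2 \<le> m * (1 / (m * m))" using e2(2) m2 by (intro mult_left_mono) auto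
    moreover have "m * (\<delta>k / (3 * m)) = \<delta>k / 3" "m * (1 / (m * m)) = 1 / m" using m2 by auto
    ultimately show "m * \<phi> x < \<delta>k / 3" "m * \<phi> x < 1 / m" by linarith+
  qed
  have xtn: "norm (xt - xb) < \<delta>k" "norm (xt - xb) < 2 / m"
  proof -
    have "norm (xt - xb) \<le> norm (x - xb) + dist xt x"
      using norm_triangle_ineq[of "xt - x" "x - xb"] by (simp add: dist_norm)
    thus "norm (xt - xb) < \<delta>k" "norm (xt - xb) < 2 / m" using xn dxt mphi dk(1) by linarith+
  qed
  have phxt: "\<phi> xt < 1 / m"
  proof -
    have "(1 / m) * dist xt x \<ge> 0" using m2 by simp
    hence "\<phi> xt \<le> \<phi> x" using ek1 by linarith
    moreover have "\<epsilon>2 \<le> 1 / m"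
    proof -
      have "1 * m \<le> m * m" using m2 by (intro mult_right_mono) auto
      hence "1 / (m * m) \<le> 1 / m" using m2 by (intro divide_left_mono) auto
      thus ?thesis using e2(2) by linarith
    qed
    ultimately show ?thesis using phx by linarith
  qed
  have xtG: "xt \<notin> Gam g C p"
  proof
    assume xtG: "xt \<in> Gam g C p"
    hence ne: "Gam g C p \<noteq> {}" by auto
    hence gt: "infdist x (Gam g C p) > (m * m) * \<phi> x" using bad by (simp add: \<phi>_def)
    have "infdist x (Gam g C p) \<le> dist x xt" by (rule infdist_le[OF xtG])
    also have "\<dots> \<le> m * \<phi> x" using dxt by (simp add: dist_commute)
    also have "\<dots> \<le> (m * m) * \<phi> x"
    proof -
      have "1 * m \<le> m * m" using m2 by (intro mult_right_mono) auto
      thus ?thesis using phnn[of x] by (intro mult_right_mono) auto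
    qed
    finally show False using gt by simp
  qed
  hence ynC: "g p xt \<notin> C" by (simp add: Gam_def)
  have Cne: "C \<noteq> {}" using gbC by auto
  obtain c where cC: "c \<in> C" and cnear: "\<And>z. z \<in> C \<Longrightarrow> dist (g p xt) c \<le> dist (g p xt) z"
    using distance_attains_inf[OF C_closed Cne, of "g p xt"] by blast
  have yc: "g p xt \<noteq> c" using ynC cC by auto
  have inf_eq: "infdist (g p xt) C = norm (g p xt - c)"
    using nearest_infdist[OF cC cnear] by (simp add: dist_norm)
  have h8: "\<forall>z. norm (z - xb) \<le> \<delta>k \<longrightarrow> infdist (g p xt) C \<le> infdist (g p z) C + (1 / m) * norm (z - xt)"
  proof (intro allI impI)
    fix z assume "norm (z - xb) \<le> \<delta>k"
    hence "z \<in> K" by (simp add: K_def dist_norm norm_minus_commute)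
    from ek2[OF this] show "infdist (g p xt) C \<le> infdist (g p z) C + (1 / m) * norm (z - xt)"
      by (simp add: \<phi>_def dist_norm)
  qed
  have h9: "(1 / norm (g p xt - c)) *\<^sub>R (g p xt - c) \<in> regular_normal_cone C c"
    by (rule proximal_normal[OF cC _ yc]) (use cnear in \<open>simp add: dist_norm\<close>)
  have h10: "norm (transpose (pjac g p xt) *v ((1 / norm (g p xt - c)) *\<^sub>R (g p xt - c))) \<le> 1 / m"
  proof (rule grad_bound[where \<delta>="\<delta>k - norm (xt - xb)"])
    show "(g p has_derivative (\<lambda>h. pjac g p xt *v h)) (at xt)" using h3' xtn(1) by blast
    show "g p xt \<noteq> c" by (rule yc)
    show "0 \<le> 1 / m" using m2 by simp
    show "0 < \<delta>k - norm (xt - xb)" using xtn(1) by simp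
    fix x' assume x': "norm (x' - xt) < \<delta>k - norm (xt - xb)"
    have "norm (x' - xb) \<le> norm (x' - xt) + norm (xt - xb)"
      using norm_triangle_ineq[of "x' - xt" "xt - xb"] by simp
    hence "norm (x' - xb) \<le> \<delta>k" using x' by linarith
    hence "infdist (g p xt) C \<le> infdist (g p x') C + (1 / m) * norm (x' - xt)" using h8 by blast
    moreover have "infdist (g p x') C \<le> norm (g p x' - c)" using infdist_le[OF cC, of "g p x'"] by (simp add: dist_norm)
    ultimately show "norm (g p xt - c) - 1 / m * norm (x' - xt) \<le> norm (g p x' - c)" using inf_eq by linarith
  qed
  have e2m: "\<epsilon>2 \<le> 1 / m"
  proof -
    have "1 * m \<le> m * m" using m2 by (intro mult_right_mono) auto
    hence "1 / (m * m) \<le> 1 / m" using m2 by (intro divide_left_mono) auto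
    thus ?thesis using e2(2) by linarith
  qed
  have h4: "norm (g p xb - g pb xb) < 1 / m" using gxb e2m by (simp add: gb_def)
  have h4b: "norm (g p xb - g pb xb) * m < \<delta>k"
  proof -
    have "norm (g p xb - gb) * m \<le> \<epsilon>2 * m" using gxb m2 by (intro mult_right_mono) auto
    also have "\<dots> \<le> (\<delta>k / (3 * m)) * m" using e2(3) m2 by (intro mult_right_mono) auto
    also have "\<dots> = \<delta>k / 3" using m2 by simp
    finally show ?thesis using dk(1) by (simp add: gb_def)
  qed
  have h5: "\<bar>\<zeta> p - \<zeta> pb\<bar> < 1 / m" by (rule S3(3)[OF pS(3)])
  have h7: "infdist (g p xt) C < 1 / m" using phxt by (simp add: \<phi>_def)
  show ?thesis unfolding m_def[symmetric]
    using dk(1) h3 h3' h4 h4b h5 xtn cC yc inf_eq h7 h8 h9 h10 unfolding A_def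
    by (intro exI[of _ p] exI[of _ xt] exI[of _ c] exI[of _ \<delta>k] conjI) auto
qed

theorem corollary3p6:
  fixes g :: "'p::topological_space \<Rightarrow> real^'n \<Rightarrow> real^'l"
    and C :: "(real^'l) set"
    and \<zeta> :: "'p \<Rightarrow> real"
    and pb :: 'p and xb :: "real^'n"
  assumes C_closed: "closed C"
    and standing: "standing_assumptions g pb xb"
    and gph: "xb \<in> Gam g C pb"
    and zeta_cont: "(\<zeta> \<longlongrightarrow> \<zeta> pb) (at pb)"
    and A1: "\<forall>v \<in> image_deriv g \<zeta> pb xb. \<forall>t :: nat \<Rightarrow> real.
               (\<forall>k. 0 < t k) \<and> t \<longlonglongrightarrow> 0 \<longrightarrow>
               (\<exists>u :: real^'n. liminf (\<lambda>k. ereal (infdist (g pb xb + t k *\<^sub>R (v + pjac g pb xb *v u)) C / t k)) = 0)"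
    and A2: "\<forall>v \<in> image_deriv g \<zeta> pb xb. \<forall>u :: real^'n.
               (v, u) \<noteq> (0, 0) \<and> v + pjac g pb xb *v u \<in> tangent_cone C (g pb xb) \<longrightarrow>
               (\<forall>y. y \<in> dir_normal_cone C (g pb xb) (v + pjac g pb xb *v u) \<and>
                    transpose (pjac g pb xb) *v y = 0 \<longrightarrow> y = 0)"
  shows "robinson_stable g C pb xb"
proof (rule ccontr)
  assume nrs: "\<not> robinson_stable g C pb xb"
  obtain U0 V0 where UV: "open U0" "xb \<in> U0" "open V0" "pb \<in> V0"
    and dU0: "\<forall>p\<in>V0. (\<forall>x\<in>U0. g p differentiable (at x))"
    using standing unfolding standing_assumptions_def by blast
  have lg: "((\<lambda>(p, x). g p x) \<longlongrightarrow> g pb xb) (at (pb, xb))"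
    and lj: "((\<lambda>(p, x). pjac g p x) \<longlongrightarrow> pjac g pb xb) (at (pb, xb))"
    using standing unfolding standing_assumptions_def by blast+
  have gbC: "g pb xb \<in> C" using gph by (simp add: Gam_def)
  have dU: "\<And>p x. p \<in> V0 \<Longrightarrow> x \<in> U0 \<Longrightarrow> g p differentiable (at x)" using dU0 by blast
  have "\<forall>k. \<exists>p xt c \<delta>. 0 < \<delta> \<and>
    (\<forall>x. norm (x - xb) < \<delta> \<longrightarrow> norm (pjac g p x - pjac g pb xb) < 1 / (real k + 2)) \<and>
    (\<forall>x. norm (x - xb) < \<delta> \<longrightarrow> (g p has_derivative (\<lambda>h. pjac g p x *v h)) (at x)) \<and>
    norm (g p xb - g pb xb) < 1 / (real k + 2) \<and>
    norm (g p xb - g pb xb) * (real k + 2) < \<delta> \<and>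
    \<bar>\<zeta> p - \<zeta> pb\<bar> < 1 / (real k + 2) \<and>
    norm (xt - xb) < \<delta> \<and> norm (xt - xb) < 2 / (real k + 2) \<and>
    c \<in> C \<and> g p xt \<noteq> c \<and> infdist (g p xt) C = norm (g p xt - c) \<and>
    infdist (g p xt) C < 1 / (real k + 2) \<and>
    (\<forall>z. norm (z - xb) \<le> \<delta> \<longrightarrow> infdist (g p xt) C \<le> infdist (g p z) C + (1 / (real k + 2)) * norm (z - xt)) \<and>
    (1 / norm (g p xt - c)) *\<^sub>R (g p xt - c) \<in> regular_normal_cone C c \<and>
    norm (transpose (pjac g p xt) *v ((1 / norm (g p xt - c)) *\<^sub>R (g p xt - c))) \<le> 1 / (real k + 2)"
    using step[OF C_closed gbC UV dU lg lj zeta_cont nrs] by blast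
  then obtain P XT CC DL where H: "\<forall>k. 0 < DL k \<and>
    (\<forall>x. norm (x - xb) < DL k \<longrightarrow> norm (pjac g (P k) x - pjac g pb xb) < 1 / (real k + 2)) \<and>
    (\<forall>x. norm (x - xb) < DL k \<longrightarrow> (g (P k) has_derivative (\<lambda>h. pjac g (P k) x *v h)) (at x)) \<and>
    norm (g (P k) xb - g pb xb) < 1 / (real k + 2) \<and>
    norm (g (P k) xb - g pb xb) * (real k + 2) < DL k \<and>
    \<bar>\<zeta> (P k) - \<zeta> pb\<bar> < 1 / (real k + 2) \<and>
    norm (XT k - xb) < DL k \<and> norm (XT k - xb) < 2 / (real k + 2) \<and>
    CC k \<in> C \<and> g (P k) (XT k) \<noteq> CC k \<and> infdist (g (P k) (XT k)) C = norm (g (P k) (XT k) - CC k) \<and>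
    infdist (g (P k) (XT k)) C < 1 / (real k + 2) \<and>
    (\<forall>z. norm (z - xb) \<le> DL k \<longrightarrow> infdist (g (P k) (XT k)) C \<le> infdist (g (P k) z) C + (1 / (real k + 2)) * norm (z - XT k)) \<and>
    (1 / norm (g (P k) (XT k) - CC k)) *\<^sub>R (g (P k) (XT k) - CC k) \<in> regular_normal_cone C (CC k) \<and>
    norm (transpose (pjac g (P k) (XT k)) *v ((1 / norm (g (P k) (XT k) - CC k)) *\<^sub>R (g (P k) (XT k) - CC k))) \<le> 1 / (real k + 2)"
    by metis
  have H2: "\<And>k. 0 < DL k" using H by blast
  have H3: "\<And>k x. norm (x - xb) < DL k \<Longrightarrow> norm (pjac g (P k) x - pjac g pb xb) < 1 / (real k + 2)" using H by blast
  have H3': "\<And>k x. norm (x - xb) < DL k \<Longrightarrow> (g (P k) has_derivative (\<lambda>h. pjac g (P k) x *v h)) (at x)" using H by blast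
  have H4: "\<And>k. norm (g (P k) xb - g pb xb) < 1 / (real k + 2)" using H by blast
  have H4b: "\<And>k. norm (g (P k) xb - g pb xb) * (real k + 2) < DL k" using H by blast
  have H5: "\<And>k. \<bar>\<zeta> (P k) - \<zeta> pb\<bar> < 1 / (real k + 2)" using H by blast
  have H6: "\<And>k. norm (XT k - xb) < DL k" "\<And>k. norm (XT k - xb) < 2 / (real k + 2)" using H by blast+
  have H7: "\<And>k. CC k \<in> C" "\<And>k. g (P k) (XT k) \<noteq> CC k"
      "\<And>k. infdist (g (P k) (XT k)) C = norm (g (P k) (XT k) - CC k)"
      "\<And>k. infdist (g (P k) (XT k)) C < 1 / (real k + 2)" using H by blast+
  have H8: "\<And>k z. norm (z - xb) \<le> DL k \<Longrightarrow> infdist (g (P k) (XT k)) C \<le> infdist (g (P k) z) C + (1 / (real k + 2)) * norm (z - XT k)"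
    using H by blast
  have H9: "\<And>k. (1 / norm (g (P k) (XT k) - CC k)) *\<^sub>R (g (P k) (XT k) - CC k) \<in> regular_normal_cone C (CC k)" using H by blast
  have H10: "\<And>k. norm (transpose (pjac g (P k) (XT k)) *v ((1 / norm (g (P k) (XT k) - CC k)) *\<^sub>R (g (P k) (XT k) - CC k))) \<le> 1 / (real k + 2)"
    using H by blast
  show False
    by (rule core[OF gbC A1 A2 H2 H3 H3' H4 H4b H5 H6 H7 H8 H9 H10])
qed
end
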